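(* Fix $\epsilon_2>0$ and $(u_\pm,v_\pm)$ with $v_\pm>0$ and $u_+<u_--2\epsilon_2$. Then there exists $\epsilon_0>0$ such that for every $0<\epsilon_1<\epsilon_0$ the state $(u_+,v_+)$ lies in the region $S_1S_2(u_-,v_-)$, i.e., the Riemann problem of the perturbed Brio system with data $(u_\pm,v_\pm)$ is solved by a backward shock $S_1$ followed by a forward shock $S_2$.
   Context: Perturbed Brio system: $u_t+(\tfrac12u^2+\tfrac12\epsilon_1v^2)_x=0$, $v_t+(uv-\epsilon_2v)_x=0$, $\epsilon_1,\epsilon_2>0$, $v>0$. Backward shock curve from $(u_-,v_-)$: $u=u_-+(v-v_-)\frac{\epsilon_2-\sqrt{\epsilon_2^2+4\epsilon_1(v+v_-)^2}}{v+v_-}$, $v>v_-$; forward shock curve: $u=u_-+(v-v_-)\frac{\epsilon_2+\sqrt{\epsilon_2^2+4\epsilon_1(v+v_-)^2}}{v+v_-}$, $0<v<v_-$. Being in $S_1S_2(u_-,v_-)$ means there is an intermediate state $(u_*,v_* )$ on the backward shock curve from $(u_-,v_-)$ such that $(u_+,v_+)$ lies on the forward shock curve from $(u_*,v_* )$. *)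

theory Defs
  imports Complex_Main
begin

text \<open>Perturbed Brio system with parameters e1 = epsilon_1, e2 = epsilon_2.\<close>
definition backward_shock :: "real \<Rightarrow> real \<Rightarrow> real \<Rightarrow> real \<Rightarrow> real \<Rightarrow> real \<Rightarrow> bool" where
  "backward_shock e1 e2 ul vl u v \<longleftrightarrow>
     v \<ge> vl \<and>
     u = ul + (v - vl) * (e2 - sqrt (e2^2 + 4 * e1 * (v + vl)^2)) / (v + vl)"

definition forward_shock :: "real \<Rightarrow> real \<Rightarrow> real \<Rightarrow> real \<Rightarrow> real \<Rightarrow> real \<Rightarrow> bool" where
  "forward_shock e1 e2 ul vl u v \<longleftrightarrow>
     0 < v \<and> v \<le> vl \<and>
     u = ul + (v - vl) * (e2 + sqrt (e2^2 + 4 * e1 * (v + vl)^2)) / (v + vl)"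

definition in_S1S2 :: "real \<Rightarrow> real \<Rightarrow> real \<Rightarrow> real \<Rightarrow> real \<Rightarrow> real \<Rightarrow> bool" where
  "in_S1S2 e1 e2 ul vl ur vr \<longleftrightarrow>
     (\<exists>us vs. backward_shock e1 e2 ul vl us vs \<and> forward_shock e1 e2 us vs ur vr)"

end

theory Submission
  imports Defs
begin

lemma sq_bounds:
  fixes e1 e2 X :: real
  assumes "e1 > 0" "e2 > 0" "X \<ge> 0"
  shows "2 * sqrt e1 * X \<le> sqrt (e2^2 + 4*e1*X^2)" "sqrt (e2^2 + 4*e1*X^2) \<le> e2 + 2 * sqrt e1 * X"
proof -
  have s2: "(sqrt e1)^2 = e1" using assms by simp
  have "sqrt ((2 * sqrt e1 * X)^2) \<le> sqrt (e2^2 + 4*e1*X^2)"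
    by (rule real_sqrt_le_mono) (simp add: power_mult_distrib s2)
  then show "2 * sqrt e1 * X \<le> sqrt (e2^2 + 4*e1*X^2)" using assms by simp
  have "sqrt (e2^2 + 4*e1*X^2) \<le> sqrt ((e2 + 2 * sqrt e1 * X)^2)"
  proof (rule real_sqrt_le_mono)
    have ss: "sqrt e1 * sqrt e1 = e1" using assms by simp
    have "0 \<le> e2 * sqrt e1 * X" using assms by simp
    then show "e2^2 + 4*e1*X^2 \<le> (e2 + 2 * sqrt e1 * X)^2"
    proof -
      have "(e2 + 2 * sqrt e1 * X)^2 = e2^2 + (2 * sqrt e1 * X)^2 + 2 * e2 * (2 * sqrt e1 * X)"
        by (rule power2_sum)
      also have "(2 * sqrt e1 * X)^2 = 4*e1*X^2" using assms by (simp add: power_mult_distrib)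
      finally show ?thesis using \<open>0 \<le> e2 * sqrt e1 * X\<close> by simp
    qed
  qed
  then show "sqrt (e2^2 + 4*e1*X^2) \<le> e2 + 2 * sqrt e1 * X" using assms by simp
qed

lemma L1:
  fixes e1 e2 vs vm :: real
  assumes "e1 > 0" "e2 > 0" "vm > 0" "vs \<ge> vm"
  shows "(vs - vm) * (e2 - sqrt (e2^2 + 4*e1*(vs+vm)^2)) / (vs+vm) \<ge> - 2 * sqrt e1 * (vs - vm)"
    "(vs - vm) * (e2 - sqrt (e2^2 + 4*e1*(vs+vm)^2)) / (vs+vm) \<le> e2 - 2 * sqrt e1 * (vs - vm)"
proof -
  define X where "X = vs + vm"
  define q where "q = sqrt (e2^2 + 4*e1*X^2)"
  have X: "X > 0" using assms X_def by simp
  have b: "2 * sqrt e1 * X \<le> q" "q \<le> e2 + 2 * sqrt e1 * X"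
    using sq_bounds[OF assms(1,2), of X] X unfolding q_def by auto
  have d: "vs - vm \<ge> 0" using assms by simp
  have "(vs - vm) * (- 2 * sqrt e1 * X) \<le> (vs - vm) * (e2 - q)"
    by (rule mult_left_mono) (use b d in auto)
  then show "(vs - vm) * (e2 - sqrt (e2^2 + 4*e1*(vs+vm)^2)) / (vs+vm) \<ge> - 2 * sqrt e1 * (vs - vm)"
    using X unfolding q_def[symmetric] X_def[symmetric] by (simp add: field_simps)
  have "(vs - vm) * (e2 - q) \<le> (vs - vm) * (e2 - 2 * sqrt e1 * X)"
    by (rule mult_left_mono) (use b d in auto)
  moreover have "(vs - vm) * e2 \<le> X * e2" using assms X_def by simp
  ultimately have "(vs - vm) * (e2 - q) \<le> (e2 - 2 * sqrt e1 * (vs - vm)) * X"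
    by (simp add: algebra_simps)
  then show "(vs - vm) * (e2 - sqrt (e2^2 + 4*e1*(vs+vm)^2)) / (vs+vm) \<le> e2 - 2 * sqrt e1 * (vs - vm)"
    using X unfolding q_def[symmetric] X_def[symmetric] by (simp add: field_simps)
qed

lemma L2:
  fixes e1 e2 vs vp :: real
  assumes "e1 > 0" "e2 > 0" "vp > 0" "vs \<ge> vp"
  shows "(vp - vs) * (e2 + sqrt (e2^2 + 4*e1*(vp+vs)^2)) / (vp+vs) \<ge> - 2 * e2 - 2 * sqrt e1 * (vs - vp)"
    "(vp - vs) * (e2 + sqrt (e2^2 + 4*e1*(vp+vs)^2)) / (vp+vs) \<le> 0"
proof -
  define X where "X = vp + vs"
  define q where "q = sqrt (e2^2 + 4*e1*X^2)"
  have X: "X > 0" using assms X_def by simp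
  have b: "2 * sqrt e1 * X \<le> q" "q \<le> e2 + 2 * sqrt e1 * X"
    using sq_bounds[OF assms(1,2), of X] X unfolding q_def by auto
  have q0: "q \<ge> 0" unfolding q_def using assms by (intro real_sqrt_ge_zero) simp
  have d: "vs - vp \<ge> 0" using assms by simp
  have "(vs - vp) * (e2 + q) \<le> (vs - vp) * (2*e2 + 2 * sqrt e1 * X)"
    by (rule mult_left_mono) (use b d in auto)
  moreover have "(vs - vp) * (2*e2) \<le> X * (2*e2)" using assms X_def by simp
  ultimately have "(vp - vs) * (e2 + q) \<ge> (- 2 * e2 - 2 * sqrt e1 * (vs - vp)) * X"
    by (simp add: algebra_simps)
  then show "(vp - vs) * (e2 + sqrt (e2^2 + 4*e1*(vp+vs)^2)) / (vp+vs) \<ge> - 2 * e2 - 2 * sqrt e1 * (vs - vp)"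
    using X unfolding q_def[symmetric] X_def[symmetric] by (simp add: field_simps)
  have "(vp - vs) * (e2 + q) \<le> 0" using d q0 assms
    by (simp add: mult_nonpos_nonneg)
  then show "(vp - vs) * (e2 + sqrt (e2^2 + 4*e1*(vp+vs)^2)) / (vp+vs) \<le> 0"
    using X unfolding q_def[symmetric] X_def[symmetric] by (simp add: divide_nonpos_pos)
qed

theorem lemma6p1:
  fixes e2 um vm up vp :: real
  assumes "e2 > 0" and "vm > 0" and "vp > 0" and "up < um - 2 * e2"
  shows "\<exists>e0 > 0. \<forall>e1. 0 < e1 \<and> e1 < e0 \<longrightarrow> in_S1S2 e1 e2 um vm up vp"
proof -
  define d where "d = um - 2 * e2 - up"
  have d: "d > 0" using assms d_def by simp
  define e0 where "e0 = (d / (2 * (vp + vm)))^2"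
  have e0: "e0 > 0" using d assms e0_def by simp
  show ?thesis
  proof (intro exI[of _ e0] conjI allI impI e0)
    fix e1 assume e1: "0 < e1 \<and> e1 < e0"
    define s where "s = sqrt e1"
    have s: "s > 0" using e1 s_def by simp
    have "s < sqrt e0" using e1 s_def by simp
    also have "sqrt e0 = d / (2 * (vp + vm))" using d assms e0_def by simp
    finally have sd: "2 * s * (vp + vm) < d" using assms by (simp add: field_simps)
    define F where "F = (\<lambda>vs. um + (vs - vm) * (e2 - sqrt (e2^2 + 4*e1*(vs+vm)^2)) / (vs+vm)
                         + (vp - vs) * (e2 + sqrt (e2^2 + 4*e1*(vp+vs)^2)) / (vp+vs))"
    define V0 where "V0 = max vm vp"
    have V0: "V0 \<ge> vm" "V0 \<ge> vp" unfolding V0_def by auto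
    define V1 where "V1 = V0 + (um + e2 - up) / (2 * s)"
    have V1: "V1 \<ge> V0" using d s assms V1_def by simp
    have "F V0 \<ge> um - 2 * s * (V0 - vm) - 2 * e2 - 2 * s * (V0 - vp)"
      using L1(1)[OF e1[THEN conjunct1] assms(1,2) V0(1)] L2(1)[OF e1[THEN conjunct1] assms(1,3) V0(2)]
      unfolding F_def s_def by linarith
    moreover have "2 * s * (V0 - vm) + 2 * s * (V0 - vp) \<le> 2 * s * (vp + vm)"
      using s assms unfolding V0_def by (auto simp: max_def algebra_simps)
    ultimately have FV0: "up \<le> F V0" using sd d_def by linarith
    have "F V1 \<le> um + e2 - 2 * s * (V1 - vm)"
      using L1(2)[OF e1[THEN conjunct1] assms(1,2), of V1] L2(2)[OF e1[THEN conjunct1] assms(1,3), of V1] V0 V1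
      unfolding F_def s_def by linarith
    moreover have "2 * s * (V1 - V0) = um + e2 - up" using s V1_def by simp
    moreover have "2 * s * (V0 - vm) \<ge> 0" using s V0 by simp
    ultimately have FV1: "F V1 \<le> up" by (simp add: algebra_simps)
    have cont: "\<forall>x. V0 \<le> x \<and> x \<le> V1 \<longrightarrow> isCont F x"
    proof (intro allI impI)
      fix x assume "V0 \<le> x \<and> x \<le> V1"
      then have "x + vm > 0" "vp + x > 0" using V0 assms by auto
      then show "isCont F x" unfolding F_def by (intro continuous_intros) (auto simp: add_pos_pos)
    qed
    obtain vs where vs: "V0 \<le> vs" "vs \<le> V1" "F vs = up"
      using IVT2[of F V1 up V0, OF FV1 FV0 V1 cont] by auto
    define us where "us = um + (vs - vm) * (e2 - sqrt (e2^2 + 4*e1*(vs+vm)^2)) / (vs+vm)"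
    have B: "backward_shock e1 e2 um vm us vs"
      unfolding backward_shock_def using vs V0 us_def by auto
    have Fw: "forward_shock e1 e2 us vs up vp"
      unfolding forward_shock_def using vs V0 assms(3) unfolding F_def us_def by auto
    show "in_S1S2 e1 e2 um vm up vp"
      unfolding in_S1S2_def using B Fw by blast
  qed
qed

end
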